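(* Let $G$ be a finite simple connected graph with at least $4$ vertices and $\delta_2(G)\geqslant 4$. Then either $G$ contains a chorded cycle, or every leaf block of $G$ is a triangle.
   Context: $\delta_2(G)$ is the minimum of $|N_G(u)\cup N_G(v)|$ over all pairs of distinct nonadjacent vertices $u,v$ of $G$. A chorded cycle is a cycle together with an edge of the graph, not on the cycle, joining two vertices of the cycle. A block is a maximal subgraph without cut-vertices; a leaf block of a connected graph is a block containing exactly one cut-vertex of the graph. *)

theory Defs
  imports Main
begin

definition sgraph :: "'a set \<Rightarrow> ('a \<Rightarrow> 'a \<Rightarrow> bool) \<Rightarrow> bool" where
  "sgraph V E \<longleftrightarrow> finite V \<and> (\<forall>u v. E u v \<longrightarrow> u \<in> V \<and> v \<in> V)
     \<and> (\<forall>u v. E u v \<longrightarrow> E v u) \<and> (\<forall>u. \<not> E u u)"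

definition nbhd :: "'a set \<Rightarrow> ('a \<Rightarrow> 'a \<Rightarrow> bool) \<Rightarrow> 'a \<Rightarrow> 'a set" where
  "nbhd V E u = {w \<in> V. E u w}"

definition reach_in :: "('a \<Rightarrow> 'a \<Rightarrow> bool) \<Rightarrow> 'a set \<Rightarrow> 'a \<Rightarrow> 'a \<Rightarrow> bool" where
  "reach_in E S u v \<longleftrightarrow> u \<in> S \<and> (\<lambda>a b. a \<in> S \<and> b \<in> S \<and> E a b)\<^sup>*\<^sup>* u v"

definition connected_in :: "('a \<Rightarrow> 'a \<Rightarrow> bool) \<Rightarrow> 'a set \<Rightarrow> bool" where
  "connected_in E S \<longleftrightarrow> (\<forall>u\<in>S. \<forall>v\<in>S. reach_in E S u v)"

text \<open>x is a cut-vertex of the induced subgraph G[S]: deleting x increases the number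
  of components, i.e. two vertices of S - {x} connected in G[S] become disconnected.\<close>
definition cut_vertex :: "('a \<Rightarrow> 'a \<Rightarrow> bool) \<Rightarrow> 'a set \<Rightarrow> 'a \<Rightarrow> bool" where
  "cut_vertex E S x \<longleftrightarrow> x \<in> S \<and>
     (\<exists>u\<in>S - {x}. \<exists>v\<in>S - {x}. reach_in E S u v \<and> \<not> reach_in E (S - {x}) u v)"

text \<open>A block is a maximal connected subgraph without cut-vertices; maximal such
  subgraphs are induced, so we represent blocks by their vertex sets.\<close>
definition nonsep :: "('a \<Rightarrow> 'a \<Rightarrow> bool) \<Rightarrow> 'a set \<Rightarrow> bool" where
  "nonsep E B \<longleftrightarrow> B \<noteq> {} \<and> connected_in E B \<and> (\<forall>x. \<not> cut_vertex E B x)"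

definition is_block :: "'a set \<Rightarrow> ('a \<Rightarrow> 'a \<Rightarrow> bool) \<Rightarrow> 'a set \<Rightarrow> bool" where
  "is_block V E B \<longleftrightarrow> B \<subseteq> V \<and> nonsep E B \<and>
     (\<forall>B'. B \<subset> B' \<and> B' \<subseteq> V \<longrightarrow> \<not> nonsep E B')"

definition leaf_block :: "'a set \<Rightarrow> ('a \<Rightarrow> 'a \<Rightarrow> bool) \<Rightarrow> 'a set \<Rightarrow> bool" where
  "leaf_block V E B \<longleftrightarrow> is_block V E B \<and> card {x \<in> B. cut_vertex E V x} = 1"

definition is_triangle :: "('a \<Rightarrow> 'a \<Rightarrow> bool) \<Rightarrow> 'a set \<Rightarrow> bool" where
  "is_triangle E B \<longleftrightarrow> card B = 3 \<and> (\<forall>u\<in>B. \<forall>v\<in>B. u \<noteq> v \<longrightarrow> E u v)"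

definition is_cycle :: "'a set \<Rightarrow> ('a \<Rightarrow> 'a \<Rightarrow> bool) \<Rightarrow> 'a list \<Rightarrow> bool" where
  "is_cycle V E cs \<longleftrightarrow> length cs \<ge> 3 \<and> distinct cs \<and> set cs \<subseteq> V \<and>
     (\<forall>i < length cs. E (cs ! i) (cs ! ((i + 1) mod length cs)))"

definition has_chorded_cycle :: "'a set \<Rightarrow> ('a \<Rightarrow> 'a \<Rightarrow> bool) \<Rightarrow> bool" where
  "has_chorded_cycle V E \<longleftrightarrow> (\<exists>cs. is_cycle V E cs \<and>
     (\<exists>i < length cs. \<exists>j < length cs. i \<noteq> j \<and> E (cs ! i) (cs ! j) \<and>
        j \<noteq> (i + 1) mod length cs \<and> i \<noteq> (j + 1) mod length cs))"

text \<open>delta_2(G) >= k: every pair of distinct nonadjacent vertices has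
  |N(u) \<union> N(v)| >= k (vacuous when there is no such pair).\<close>
definition delta2_ge :: "'a set \<Rightarrow> ('a \<Rightarrow> 'a \<Rightarrow> bool) \<Rightarrow> nat \<Rightarrow> bool" where
  "delta2_ge V E k \<longleftrightarrow> (\<forall>u\<in>V. \<forall>v\<in>V. u \<noteq> v \<and> \<not> E u v \<longrightarrow>
     card (nbhd V E u \<union> nbhd V E v) \<ge> k)"

end

theory Submission
  imports Defs
begin


definition echain :: "('a \<Rightarrow> 'a \<Rightarrow> bool) \<Rightarrow> 'a list \<Rightarrow> bool" where
  "echain E ps \<longleftrightarrow> (\<forall>i. Suc i < length ps \<longrightarrow> E (ps ! i) (ps ! Suc i))"

definition gpath :: "('a \<Rightarrow> 'a \<Rightarrow> bool) \<Rightarrow> 'a set \<Rightarrow> 'a list \<Rightarrow> bool" where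
  "gpath E S ps \<longleftrightarrow> ps \<noteq> [] \<and> distinct ps \<and> set ps \<subseteq> S \<and> echain E ps"

lemma reach_mono:
  assumes "reach_in E S u v" "S \<subseteq> T" shows "reach_in E T u v"
proof -
  have "(\<lambda>a b. a \<in> S \<and> b \<in> S \<and> E a b)\<^sup>*\<^sup>* u v" "u \<in> S" using assms(1) unfolding reach_in_def by auto
  then have "(\<lambda>a b. a \<in> T \<and> b \<in> T \<and> E a b)\<^sup>*\<^sup>* u v"
    by (induction rule: rtranclp_induct) (use assms(2) in \<open>auto intro: rtranclp.rtrancl_into_rtrancl\<close>)
  then show ?thesis using \<open>u \<in> S\<close> assms(2) unfolding reach_in_def by auto
qed

lemma reach_last: "reach_in E S u v \<Longrightarrow> v \<in> S"
  unfolding reach_in_def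
  by (metis (no_types, lifting) rtranclp.cases)

lemma reach_trans: "reach_in E S u v \<Longrightarrow> reach_in E S v w \<Longrightarrow> reach_in E S u w"
  unfolding reach_in_def by auto

lemma reach_refl: "u \<in> S \<Longrightarrow> reach_in E S u u"
  unfolding reach_in_def by auto

lemma reach_edge: "u \<in> S \<Longrightarrow> v \<in> S \<Longrightarrow> E u v \<Longrightarrow> reach_in E S u v"
  unfolding reach_in_def by auto

lemma reach_sym:
  assumes "\<forall>a b. E a b \<longrightarrow> E b a" "reach_in E S u v" shows "reach_in E S v u"
proof -
  have "(\<lambda>a b. a \<in> S \<and> b \<in> S \<and> E a b)\<^sup>*\<^sup>* u v" "u \<in> S" using assms(2) unfolding reach_in_def by auto
  then have "(\<lambda>a b. a \<in> S \<and> b \<in> S \<and> E a b)\<^sup>*\<^sup>* v u"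
    by (induction rule: rtranclp_induct) (use assms(1) in \<open>auto intro: converse_rtranclp_into_rtranclp\<close>)
  then show ?thesis using assms(2) reach_last unfolding reach_in_def by metis
qed

lemma reach_closed:
  assumes "reach_in E S u v" "u \<in> C" "\<forall>a b. a \<in> C \<longrightarrow> b \<in> S \<longrightarrow> E a b \<longrightarrow> b \<in> C"
  shows "v \<in> C"
proof -
  have "(\<lambda>a b. a \<in> S \<and> b \<in> S \<and> E a b)\<^sup>*\<^sup>* u v" using assms(1) unfolding reach_in_def by auto
  then show ?thesis by (induction rule: rtranclp_induct) (use assms in auto)
qed

lemma reach_first:
  assumes "reach_in E S u v" "u \<noteq> v" shows "\<exists>u'. u' \<in> S \<and> E u u'"
proof -
  have "(\<lambda>a b. a \<in> S \<and> b \<in> S \<and> E a b)\<^sup>*\<^sup>* u v" using assms(1) unfolding reach_in_def by auto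
  then show ?thesis using assms(2) by (cases rule: converse_rtranclpE) auto
qed

lemma echain_append:
  assumes "echain E ps" "ps \<noteq> []" "E (last ps) b" shows "echain E (ps @ [b])"
  unfolding echain_def
proof (intro allI impI)
  fix i assume i: "Suc i < length (ps @ [b])"
  show "E ((ps @ [b]) ! i) ((ps @ [b]) ! Suc i)"
  proof (cases "Suc i < length ps")
    case True then show ?thesis using assms(1) unfolding echain_def by (auto simp: nth_append)
  next
    case False
    then have "i = length ps - 1" using i by auto
    then show ?thesis using assms(2,3) by (auto simp: nth_append last_conv_nth)
  qed
qed

lemma echain_take: "echain E ps \<Longrightarrow> echain E (take k ps)"
  unfolding echain_def by auto

lemma echain_drop: "echain E ps \<Longrightarrow> echain E (drop k ps)"
  unfolding echain_def by auto

lemma echain_Cons: "echain E ps \<Longrightarrow> ps \<noteq> [] \<Longrightarrow> E z (hd ps) \<Longrightarrow> echain E (z # ps)"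
  unfolding echain_def by (auto simp: nth_Cons hd_conv_nth split: nat.splits)

lemma echain_rev:
  assumes "\<forall>a b. E a b \<longrightarrow> E b a" "echain E ps" shows "echain E (rev ps)"
  unfolding echain_def
proof (intro allI impI)
  fix i assume i: "Suc i < length (rev ps)"
  have "E (ps ! (length ps - Suc (Suc i))) (ps ! Suc (length ps - Suc (Suc i)))"
    using assms(2) i unfolding echain_def by auto
  moreover have "Suc (length ps - Suc (Suc i)) = length ps - Suc i" using i by auto
  ultimately show "E (rev ps ! i) (rev ps ! Suc i)" using assms(1) i by (auto simp: rev_nth)
qed

lemma reach_path:
  assumes "reach_in E S u v" shows "\<exists>ps. gpath E S ps \<and> hd ps = u \<and> last ps = v"
proof -
  have "(\<lambda>a b. a \<in> S \<and> b \<in> S \<and> E a b)\<^sup>*\<^sup>* u v" "u \<in> S" using assms(1) unfolding reach_in_def by auto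
  then show ?thesis
  proof (induction rule: rtranclp_induct)
    case base
    then show ?case by (intro exI[of _ "[u]"]) (auto simp: gpath_def echain_def)
  next
    case (step a b)
    then obtain ps where ps: "gpath E S ps" "hd ps = u" "last ps = a" by auto
    show ?case
    proof (cases "b \<in> set ps")
      case True
      then obtain k where k: "k < length ps" "ps ! k = b" by (auto simp: in_set_conv_nth)
      have "gpath E S (take (Suc k) ps)"
        using ps(1) k unfolding gpath_def by (auto intro: echain_take dest: in_set_takeD)
      moreover have "last (take (Suc k) ps) = b" using k by (simp add: take_Suc_conv_app_nth)
      moreover have "hd (take (Suc k) ps) = u" using ps by simp
      ultimately show ?thesis by blast
    next
      case False
      have "gpath E S (ps @ [b])" using ps step False unfolding gpath_def by (auto intro: echain_append)
      moreover have "hd (ps @ [b]) = u" "last (ps @ [b]) = b" using ps by (auto simp: gpath_def)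
      ultimately show ?thesis by blast
    qed
  qed
qed

lemma segment_reach:
  assumes "echain E ps" "j < length ps" "i \<le> j" "\<forall>r. i \<le> r \<and> r \<le> j \<longrightarrow> ps ! r \<in> S"
  shows "reach_in E S (ps ! i) (ps ! j)"
  using assms(2-4)
proof (induction j)
  case 0 then show ?case by (auto intro: reach_refl)
next
  case (Suc j)
  show ?case
  proof (cases "i = Suc j")
    case True then show ?thesis using Suc by (auto intro: reach_refl)
  next
    case False
    then have "reach_in E S (ps ! i) (ps ! j)" using Suc by auto
    moreover have "E (ps ! j) (ps ! Suc j)" using assms(1) Suc(2) unfolding echain_def by auto
    moreover have "ps ! j \<in> S" "ps ! Suc j \<in> S" using Suc.prems False by auto
    ultimately show ?thesis by (meson reach_trans reach_edge)
  qed
qed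



lemma sg_sym: "sgraph V E \<Longrightarrow> E a b \<Longrightarrow> E b a" unfolding sgraph_def by blast
lemma sg_irr: "sgraph V E \<Longrightarrow> \<not> E a a" unfolding sgraph_def by blast
lemma sg_in: "sgraph V E \<Longrightarrow> E a b \<Longrightarrow> a \<in> V \<and> b \<in> V" unfolding sgraph_def by blast
lemma sg_fin: "sgraph V E \<Longrightarrow> finite V" unfolding sgraph_def by blast
lemma nbhd_sub: "nbhd V E u \<subseteq> V" unfolding nbhd_def by auto
lemma nbhd_fin: "sgraph V E \<Longrightarrow> finite (nbhd V E u)" using nbhd_sub sg_fin finite_subset by metis
lemma in_nbhd: "sgraph V E \<Longrightarrow> z \<in> nbhd V E u \<longleftrightarrow> E u z" unfolding nbhd_def sgraph_def by auto

lemma cc_core: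
  assumes sg: "sgraph V E" and p: "gpath E V ps" and pq: "p < q" "Suc (Suc q) < length ps"
    and e1: "E (last ps) (ps!p)" and e2: "E (last ps) (ps!q)"
  shows "has_chorded_cycle V E"
proof -
  define cs where "cs = drop p ps"
  define m where "m = length cs"
  have m: "m = length ps - p" unfolding m_def cs_def by simp
  have m3: "m \<ge> 3" using m pq by auto
  have nth: "\<And>i. i < m \<Longrightarrow> cs ! i = ps ! (p + i)" unfolding cs_def m_def using pq by auto
  have lastcs: "cs ! (m - 1) = last ps"
    using nth[of "m - 1"] m m3 p by (auto simp: gpath_def last_conv_nth)
  have cyc: "is_cycle V E cs"
    unfolding is_cycle_def
  proof (intro conjI allI impI)
    show "3 \<le> length cs" using m3 m_def by simp
    show "distinct cs" using p unfolding cs_def gpath_def by auto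
    show "set cs \<subseteq> V" using p unfolding cs_def gpath_def by (meson order_trans set_drop_subset)
    fix i assume i: "i < length cs"
    show "E (cs ! i) (cs ! ((i + 1) mod length cs))"
    proof (cases "Suc i < m")
      case True
      then have "(i + 1) mod length cs = Suc i" using m_def by auto
      moreover have "E (ps ! (p + i)) (ps ! Suc (p + i))" using p True m unfolding gpath_def echain_def by auto
      ultimately show ?thesis using nth True by auto
    next
      case False
      then have "i = m - 1" using i m_def by auto
      moreover have "Suc i = length cs" using False i m_def by auto
      then have "(i + 1) mod length cs = 0" by simp
      moreover have "cs ! 0 = ps ! p" using nth[of 0] m3 by auto
      ultimately show ?thesis using lastcs e1 m_def by auto
    qed
  qed
  have "E (cs ! (m - 1)) (cs ! (q - p))" using lastcs nth[of "q - p"] m pq e2 by auto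
  moreover have "q - p \<noteq> (m - 1 + 1) mod m" using m3 pq by auto
  moreover have "m - 1 \<noteq> (q - p + 1) mod m" using m3 pq m by auto
  moreover have "m - 1 < m" "q - p < m" "m - 1 \<noteq> q - p" using m3 m pq by auto
  ultimately show ?thesis unfolding has_chorded_cycle_def using cyc m_def by blast
qed

lemma two_elems: "finite A \<Longrightarrow> card A \<ge> 2 \<Longrightarrow> \<exists>a\<in>A. \<exists>b\<in>A. a \<noteq> b"
  using card_le_Suc0_iff_eq by fastforce

lemma cc_deg:
  assumes sg: "sgraph V E" and p: "gpath E V ps"
    and sub: "nbhd V E (last ps) \<subseteq> set ps" and c3: "card (nbhd V E (last ps)) \<ge> 3"
  shows "has_chorded_cycle V E"
proof -
  define n where "n = length ps"
  define A where "A = nbhd V E (last ps) - {ps ! (n - 2)}"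
  have fA: "finite A" unfolding A_def using nbhd_fin[OF sg] by auto
  have "card A \<ge> 2" unfolding A_def using c3 by (auto simp: card_Diff_singleton_if)
  then obtain a b where ab: "a \<in> A" "b \<in> A" "a \<noteq> b" using two_elems fA by blast
  have ne: "ps \<noteq> []" using p gpath_def by auto
  have lst: "last ps = ps ! (n - 1)" using ne n_def last_conv_nth by auto
  have idx: "\<exists>i. Suc (Suc i) < n \<and> ps ! i = c \<and> E (last ps) c" if "c \<in> A" for c
  proof -
    have c: "c \<in> set ps" "E (last ps) c" "c \<noteq> ps ! (n - 2)" using that sub in_nbhd[OF sg] unfolding A_def by auto
    then obtain i where i: "i < n" "ps ! i = c" unfolding n_def by (auto simp: in_set_conv_nth)
    have "i \<noteq> n - 1" using c(2) i lst sg_irr[OF sg] by auto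
    moreover have "i \<noteq> n - 2" using i c(3) by auto
    ultimately show ?thesis using i c by (intro exI[of _ i]) auto
  qed
  obtain ia where ia: "Suc (Suc ia) < n" "ps ! ia = a" "E (last ps) a" using idx ab by blast
  obtain ib where ib: "Suc (Suc ib) < n" "ps ! ib = b" "E (last ps) b" using idx ab by blast
  have "ia \<noteq> ib" using ia ib ab by auto
  then show ?thesis
  proof (cases "ia < ib")
    case True then show ?thesis using cc_core[OF sg p, of ia ib] ia ib n_def by auto
  next
    case False then show ?thesis using cc_core[OF sg p, of ib ia] ia ib n_def \<open>ia \<noteq> ib\<close> by auto
  qed
qed

lemma gpath_rev: "sgraph V E \<Longrightarrow> gpath E S ps \<Longrightarrow> gpath E S (rev ps)"
proof -
  assume a: "sgraph V E" "gpath E S ps"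
  have "\<forall>a b. E a b \<longrightarrow> E b a" using sg_sym[OF a(1)] by blast
  then show ?thesis using a(2) echain_rev[of E ps] unfolding gpath_def by auto
qed

lemma gpath_snoc: "gpath E S ps \<Longrightarrow> z \<in> S \<Longrightarrow> z \<notin> set ps \<Longrightarrow> E (last ps) z
   \<Longrightarrow> gpath E S (ps @ [z]) \<and> hd (ps @ [z]) = hd ps \<and> length (ps @ [z]) = Suc (length ps)"
  unfolding gpath_def by (auto intro: echain_append)

lemma gpath_len: "sgraph V E \<Longrightarrow> S \<subseteq> V \<Longrightarrow> gpath E S ps \<Longrightarrow> length ps \<le> card V"
proof -
  assume a: "sgraph V E" "S \<subseteq> V" "gpath E S ps"
  then have "distinct ps" "set ps \<subseteq> V" "finite V" using sg_fin unfolding gpath_def by auto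
  then have "length ps = card (set ps)" by (simp add: distinct_card)
  moreover have "card (set ps) \<le> card V" using card_mono[OF \<open>finite V\<close> \<open>set ps \<subseteq> V\<close>] .
  ultimately show ?thesis by simp
qed

lemma longest:
  assumes sg: "sgraph V E" "S \<subseteq> V" "gpath E S ps0" "Q ps0"
  shows "\<exists>ps. gpath E S ps \<and> Q ps \<and> (\<forall>ps'. gpath E S ps' \<and> Q ps' \<longrightarrow> length ps' \<le> length ps)"
proof -
  let ?P = "\<lambda>n. \<exists>ps. gpath E S ps \<and> Q ps \<and> length ps = n"
  have h1: "?P (length ps0)" using assms by auto
  have h2: "\<forall>y. ?P y \<longrightarrow> y \<le> card V"
  proof (intro allI impI)
    fix y assume "?P y"
    then obtain ps where "gpath E S ps" "length ps = y" by blast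
    then show "y \<le> card V" using gpath_len[OF sg(1,2)] by blast
  qed
  have "\<exists>x. ?P x \<and> (\<forall>y. ?P y \<longrightarrow> y \<le> x)" by (rule Nat.ex_has_greatest_nat[of ?P, OF h1 h2])
  then obtain n where n: "?P n" "\<forall>y. ?P y \<longrightarrow> y \<le> n" by blast
  then obtain ps where ps: "gpath E S ps" "Q ps" "length ps = n" by blast
  have "\<forall>ps'. gpath E S ps' \<and> Q ps' \<longrightarrow> length ps' \<le> length ps"
  proof (intro allI impI)
    fix ps' assume "gpath E S ps' \<and> Q ps'"
    then have "?P (length ps')" by blast
    then show "length ps' \<le> length ps" using n(2) ps(3) by blast
  qed
  then show ?thesis using ps by blast
qed

lemma end_nbrs:
  assumes sg: "sgraph V E" and p: "gpath E S ps" and Q: "Q ps"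
    and mx: "\<forall>ps'. gpath E S ps' \<and> Q ps' \<longrightarrow> length ps' \<le> length ps"
    and Qext: "\<And>z. gpath E S (ps @ [z]) \<Longrightarrow> Q (ps @ [z])"
    and NS: "nbhd V E (last ps) \<subseteq> S"
  shows "nbhd V E (last ps) \<subseteq> set ps"
proof
  fix z assume z: "z \<in> nbhd V E (last ps)"
  show "z \<in> set ps"
  proof (rule ccontr)
    assume "z \<notin> set ps"
    moreover have "z \<in> S" "E (last ps) z" using z NS in_nbhd[OF sg] by auto
    ultimately have g: "gpath E S (ps @ [z])" "length (ps @ [z]) = Suc (length ps)" using gpath_snoc[OF p] by blast+
    then have "length (ps @ [z]) \<le> length ps" using mx Qext[OF g(1)] by blast
    then show False using g(2) by simp
  qed
qed

lemma min_deg2: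
  assumes sg: "sgraph V E" and conn: "connected_in E V" and c4: "card V \<ge> 4"
    and d2: "delta2_ge V E 4" and nc: "\<not> has_chorded_cycle V E" and u: "u \<in> V"
  shows "card (nbhd V E u) \<ge> 2"
proof (rule ccontr)
  assume "\<not> ?thesis"
  then have cu: "card (nbhd V E u) \<le> 1" by auto
  have fin: "finite V" using sg_fin[OF sg] .
  have hz: "card (nbhd V E z) \<ge> 3" if "z \<in> V" "z \<noteq> u" "z \<notin> nbhd V E u" for z
  proof -
    have "\<not> E z u" using that in_nbhd[OF sg] sg_sym[OF sg] by blast
    then have "card (nbhd V E z \<union> nbhd V E u) \<ge> 4" using d2 that u unfolding delta2_ge_def by auto
    moreover have "card (nbhd V E z \<union> nbhd V E u) \<le> card (nbhd V E z) + card (nbhd V E u)" by (rule card_Un_le)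
    ultimately show ?thesis using cu by auto
  qed
  have "V \<noteq> {u}" using c4 by auto
  then obtain t where t: "t \<in> V" "t \<noteq> u" using u by auto
  have "reach_in E V u t" using conn u t unfolding connected_in_def by auto
  then obtain u' where "u' \<in> V" "E u u'" using reach_first t by metis
  then have "nbhd V E u \<noteq> {}" using in_nbhd[OF sg] by auto
  then have "card (nbhd V E u) = 1" using cu nbhd_fin[OF sg, of u] by (simp add: le_Suc_eq)
  then obtain v where Nu: "nbhd V E u = {v}" by (rule card_1_singletonE)
  have Euv: "E u v" using Nu in_nbhd[OF sg] by auto
  have "\<exists>w. E v w \<and> w \<noteq> u"
  proof (rule ccontr)
    assume "\<not> ?thesis"
    then have vn: "\<And>w. E v w \<Longrightarrow> w = u" by auto
    have "card {u, v} \<le> 2" by (cases "u = v") auto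
    then have "\<not> V \<subseteq> {u, v}" using c4 card_mono[of "{u,v}" V] by auto
    then obtain t' where t': "t' \<in> V" "t' \<noteq> u" "t' \<noteq> v" by auto
    have "reach_in E V u t'" using conn u t' unfolding connected_in_def by auto
    then have "t' \<in> {u, v}"
      by (rule reach_closed) (use Nu in_nbhd[OF sg] vn in auto)
    then show False using t' by auto
  qed
  then obtain w where w: "E v w" "w \<noteq> u" by auto
  have p3: "gpath E V [u, v, w]"
    using Euv w sg_irr[OF sg] sg_in[OF sg] unfolding gpath_def echain_def
    by (auto simp: nth_Cons split: nat.splits)
  obtain ps where ps: "gpath E V ps" "(\<lambda>_. True) ps"
    and mx: "\<forall>ps'. gpath E V ps' \<and> True \<longrightarrow> length ps' \<le> length ps"
    using longest[OF sg order_refl p3, of "\<lambda>_. True"] by auto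
  have n3: "length ps \<ge> 3" using mx p3 by fastforce
  have NL: "nbhd V E (last ps) \<subseteq> set ps" by (rule end_nbrs[OF sg ps(1)]) (use mx nbhd_sub[of V E] in auto)
  have psr: "gpath E V (rev ps)" using gpath_rev[OF sg ps(1)] .
  have NH: "nbhd V E (hd ps) \<subseteq> set ps"
    using end_nbrs[OF sg psr, of "\<lambda>_. True"] mx nbhd_sub[of V E] ps(1)
    by (simp add: gpath_def last_rev)
  have ne: "ps \<noteq> []" using ps gpath_def by auto
  have ends: "e = u \<or> e = v" if "e = hd ps \<or> e = last ps" for e
  proof (rule ccontr)
    assume ne': "\<not> (e = u \<or> e = v)"
    have eV: "e \<in> V" using that ps(1) ne unfolding gpath_def by auto
    have "card (nbhd V E e) \<ge> 3" using hz[OF eV] ne' Nu by auto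
    moreover have "last (rev ps) = hd ps" using ne by (simp add: last_rev)
    ultimately show False using that cc_deg[OF sg ps(1)] cc_deg[OF sg psr] NL NH nc by auto
  qed
  have dist: "distinct ps" using ps gpath_def by auto
  have hd0: "hd ps = ps ! 0" using ne hd_conv_nth by auto
  have ln: "last ps = ps ! (length ps - 1)" using ne last_conv_nth by auto
  have "0 < length ps" "length ps - 1 < length ps" "0 \<noteq> length ps - 1" using n3 by auto
  then have "ps ! 0 \<noteq> ps ! (length ps - 1)" using nth_eq_iff_index_eq[OF dist] by metis
  then have "hd ps \<noteq> last ps" using hd0 ln by auto
  have ch: "echain E ps" using ps gpath_def by auto
  consider "hd ps = u" "last ps = v" | "hd ps = v" "last ps = u"
    using ends \<open>hd ps \<noteq> last ps\<close> by metis
  then show False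
  proof cases
    case 1
    have "E (ps ! 0) (ps ! 1)" using ch n3 unfolding echain_def by auto
    then have "ps ! 1 = v" using 1 hd0 Nu in_nbhd[OF sg] by auto
    then have "ps ! 1 = ps ! (length ps - 1)" using 1 ln by auto
    moreover have "1 < length ps" "length ps - 1 < length ps" "1 \<noteq> length ps - 1" using n3 by auto
    ultimately show False using nth_eq_iff_index_eq[OF dist] by metis
  next
    case 2
    have "E (ps ! (length ps - 2)) (ps ! Suc (length ps - 2))" using ch n3 unfolding echain_def by auto
    moreover have "Suc (length ps - 2) = length ps - 1" using n3 by auto
    ultimately have "E u (ps ! (length ps - 2))" using 2 ln sg_sym[OF sg] by auto
    then have "ps ! (length ps - 2) = ps ! 0" using 2 hd0 Nu in_nbhd[OF sg] by auto
    moreover have "0 < length ps" "length ps - 2 < length ps" "length ps - 2 \<noteq> 0" using n3 by auto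
    ultimately show False using nth_eq_iff_index_eq[OF dist] by metis
  qed
qed



lemma nonsep_edge:
  assumes sg: "sgraph V E" and e: "E w z" shows "nonsep E {w, z}"
proof -
  have "connected_in E {w, z}" unfolding connected_in_def
    using e sg_sym[OF sg, OF e] by (auto intro: reach_refl reach_edge)
  moreover have "\<not> cut_vertex E {w, z} c" for c
  proof -
    have "reach_in E ({w, z} - {c}) a d" if "a \<in> {w, z} - {c}" "d \<in> {w, z} - {c}" for a d
      using that e sg_sym[OF sg, OF e] by (auto intro: reach_refl reach_edge)
    then show ?thesis unfolding cut_vertex_def by blast
  qed
  ultimately show ?thesis unfolding nonsep_def by auto
qed

lemma nonsep_del:
  assumes "nonsep E B" "a \<in> B - {c}" "d \<in> B - {c}" shows "reach_in E (B - {c}) a d"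
proof (cases "c \<in> B")
  case True
  have "reach_in E B a d" using assms unfolding nonsep_def connected_in_def by auto
  then show ?thesis using assms True unfolding nonsep_def cut_vertex_def by blast
next
  case False
  then have "B - {c} = B" by auto
  then show ?thesis using assms unfolding nonsep_def connected_in_def by auto
qed

lemma hub:
  assumes sym: "\<forall>a b. E a b \<longrightarrow> E b a" and K: "connected_in E K" "K \<subseteq> S"
    and h: "\<forall>a\<in>S. \<exists>k\<in>K. reach_in E S a k"
  shows "connected_in E S"
  unfolding connected_in_def
proof (intro ballI)
  fix a d assume a: "a \<in> S" and d: "d \<in> S"
  obtain k1 where k1: "k1 \<in> K" "reach_in E S a k1" using h a by auto
  obtain k2 where k2: "k2 \<in> K" "reach_in E S d k2" using h d by auto
  have "reach_in E S k1 k2" using K k1 k2 reach_mono unfolding connected_in_def by metis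
  then show "reach_in E S a d" using k1 k2 reach_sym[OF sym] reach_trans by metis
qed

lemma ear:
  assumes sg: "sgraph V E" and BV: "B \<subseteq> V" and ns: "nonsep E B" and w: "w \<in> B"
    and b: "b \<in> B" "b \<noteq> w" and z: "z \<in> V" "z \<notin> B" and ewz: "E w z"
    and qs: "gpath E (V - {w}) qs" "hd qs = z" "last qs = b"
  shows "\<exists>B'. B \<subset> B' \<and> B' \<subseteq> V \<and> nonsep E B'"
proof -
  have sym: "\<forall>a b. E a b \<longrightarrow> E b a" using sg sg_sym by metis
  define n where "n = length qs"
  have ne: "qs \<noteq> []" and dist: "distinct qs" and qV: "set qs \<subseteq> V - {w}" and ch: "echain E qs"
    using qs unfolding gpath_def by auto
  have q0: "qs ! 0 = z" using qs ne hd_conv_nth by metis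
  have qn: "qs ! (n - 1) = b" using qs ne last_conv_nth n_def by metis
  have n0: "n > 0" using ne n_def by auto
  have qVr: "qs ! r \<in> V" "qs ! r \<noteq> w" if "r < n" for r using qV that n_def nth_mem by blast+
  have deq: "qs ! r = qs ! t \<longleftrightarrow> r = t" if "r < n" "t < n" for r t
    using nth_eq_iff_index_eq[OF dist] that n_def by auto
  define j where "j = (LEAST j. j < n \<and> qs ! j \<in> B)"
  have ex: "n - 1 < n \<and> qs ! (n - 1) \<in> B" using n0 qn b by auto
  have hj: "j < n \<and> qs ! j \<in> B" unfolding j_def by (rule LeastI, rule ex)
  have nB: "qs ! r \<notin> B" if "r < j" for r
    using not_less_Least[of r "\<lambda>j. j < n \<and> qs ! j \<in> B"] that hj unfolding j_def[symmetric] by auto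
  have j0: "j > 0" using hj q0 z by (cases j) auto
  define I where "I = (\<lambda>r. qs ! r) ` {..<j}"
  define B' where "B' = B \<union> I"
  have inB': "qs ! r \<in> B'" if "r \<le> j" for r
    using that hj unfolding B'_def I_def by (cases "r = j") auto
  have Icase: "a \<in> I \<Longrightarrow> \<exists>s<j. a = qs ! s" for a unfolding I_def by auto
  have Bsub: "B \<subset> B'" unfolding B'_def I_def using j0 q0 z by force
  have B'V: "B' \<subseteq> V" unfolding B'_def I_def using BV qVr hj by auto
  have Bcon: "connected_in E B" using ns unfolding nonsep_def by auto
  have con: "connected_in E B'"
  proof (rule hub[OF sym Bcon])
    show "B \<subseteq> B'" using Bsub by auto
    show "\<forall>a\<in>B'. \<exists>k\<in>B. reach_in E B' a k"
    proof
      fix a assume a: "a \<in> B'"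
      show "\<exists>k\<in>B. reach_in E B' a k"
      proof (cases "a \<in> B")
        case True then show ?thesis using a by (auto intro: reach_refl)
      next
        case False
        then obtain s where s: "s < j" "a = qs ! s" using a Icase unfolding B'_def by auto
        have "reach_in E B' (qs ! s) (qs ! j)"
          by (rule segment_reach[OF ch]) (use hj s inB' n_def in auto)
        then show ?thesis using s hj by auto
      qed
    qed
  qed
  have nocut: "\<not> cut_vertex E B' c" for c
  proof -
    have "connected_in E (B' - {c})"
    proof (cases "c \<in> B")
      case True
      have Kc: "connected_in E (B - {c})" using nonsep_del[OF ns] unfolding connected_in_def by auto
      show ?thesis
      proof (rule hub[OF sym Kc])
        show "B - {c} \<subseteq> B' - {c}" using Bsub by auto
        show "\<forall>a\<in>B' - {c}. \<exists>k\<in>B - {c}. reach_in E (B' - {c}) a k"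
        proof
          fix a assume a: "a \<in> B' - {c}"
          show "\<exists>k\<in>B - {c}. reach_in E (B' - {c}) a k"
          proof (cases "a \<in> B")
            case True then show ?thesis using a by (auto intro: reach_refl)
          next
            case False
            then obtain s where s: "s < j" "a = qs ! s" using a Icase unfolding B'_def by auto
            show ?thesis
            proof (cases "qs ! j = c")
              case False
              have "reach_in E (B' - {c}) (qs ! s) (qs ! j)"
              proof (rule segment_reach[OF ch])
                show "\<forall>r. s \<le> r \<and> r \<le> j \<longrightarrow> qs ! r \<in> B' - {c}"
                proof (intro allI impI)
                  fix r assume r: "s \<le> r \<and> r \<le> j"
                  have "qs ! r \<noteq> c"
                  proof (cases "r = j")
                    case True then show ?thesis using \<open>qs ! j \<noteq> c\<close> by simp
                  next
                    case False then have "r < j" using r by simp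
                    then show ?thesis using nB \<open>c \<in> B\<close> by blast
                  qed
                  then show "qs ! r \<in> B' - {c}" using inB' r by blast
                qed
              qed (use hj s n_def in auto)
              then show ?thesis using s hj False by auto
            next
              case qc: True
              have "reach_in E (B' - {c}) (qs ! 0) (qs ! s)"
              proof (rule segment_reach[OF ch])
                show "\<forall>r. 0 \<le> r \<and> r \<le> s \<longrightarrow> qs ! r \<in> B' - {c}"
                proof (intro allI impI)
                  fix r assume r: "0 \<le> r \<and> r \<le> s"
                  then have "r < j" using s by simp
                  then have "qs ! r \<noteq> c" using nB \<open>c \<in> B\<close> by blast
                  then show "qs ! r \<in> B' - {c}" using inB' \<open>r < j\<close> by simp
                qed
              qed (use hj s n_def in auto)
              then have "reach_in E (B' - {c}) (qs ! s) (qs ! 0)" by (rule reach_sym[OF sym])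
              then have az: "reach_in E (B' - {c}) a z" using s q0 by simp
              have "qs ! j \<noteq> w" using qVr hj by blast
              then have wc: "w \<noteq> c" using qc by simp
              have zin: "z \<in> B' - {c}" using inB'[of 0] q0 z(2) \<open>c \<in> B\<close> by auto
              have win: "w \<in> B' - {c}" using w wc Bsub by auto
              have "E z w" using sg_sym[OF sg ewz] .
              then have "reach_in E (B' - {c}) z w" using reach_edge zin win by metis
              then have "reach_in E (B' - {c}) a w" using az reach_trans by metis
              then show ?thesis using w wc by blast
            qed
          qed
        qed
      qed
    next
      case False
      show ?thesis
      proof (rule hub[OF sym Bcon])
        show "B \<subseteq> B' - {c}" using Bsub False by auto
        show "\<forall>a\<in>B' - {c}. \<exists>k\<in>B. reach_in E (B' - {c}) a k"
        proof
          fix a assume a: "a \<in> B' - {c}"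
          show "\<exists>k\<in>B. reach_in E (B' - {c}) a k"
          proof (cases "a \<in> B")
            case True then show ?thesis using a by (auto intro: reach_refl)
          next
            case aB: False
            then obtain s where s: "s < j" "a = qs ! s" using a Icase unfolding B'_def by auto
            show ?thesis
            proof (cases "c \<in> B'")
              case False
              then have "B' - {c} = B'" by auto
              moreover have "reach_in E B' a w" using con a w Bsub unfolding connected_in_def by auto
              ultimately show ?thesis using w by auto
            next
              case True
              then obtain t where t: "t < j" "c = qs ! t" using Icase \<open>c \<notin> B\<close> unfolding B'_def by auto
              have "s \<noteq> t" using s t a by auto
              show ?thesis
              proof (cases "t < s")
                case True
                have "reach_in E (B' - {c}) (qs ! s) (qs ! j)"
                proof (rule segment_reach[OF ch])
                  show "\<forall>r. s \<le> r \<and> r \<le> j \<longrightarrow> qs ! r \<in> B' - {c}"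
                  proof (intro allI impI)
                    fix r assume r: "s \<le> r \<and> r \<le> j"
                    then have "r \<noteq> t" "r < n" "t < n" using True t hj by auto
                    then have "qs ! r \<noteq> c" using deq t by simp
                    then show "qs ! r \<in> B' - {c}" using inB' r by simp
                  qed
                qed (use hj s n_def in auto)
                then show ?thesis using s hj by auto
              next
                case False
                then have st: "s < t" using \<open>s \<noteq> t\<close> by auto
                have "reach_in E (B' - {c}) (qs ! 0) (qs ! s)"
                proof (rule segment_reach[OF ch])
                  show "\<forall>r. 0 \<le> r \<and> r \<le> s \<longrightarrow> qs ! r \<in> B' - {c}"
                  proof (intro allI impI)
                    fix r assume r: "0 \<le> r \<and> r \<le> s"
                    then have "r \<noteq> t" "r < n" "t < n" "r \<le> j" using st t hj by auto
                    then have "qs ! r \<noteq> c" using deq t by simp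
                    then show "qs ! r \<in> B' - {c}" using inB' \<open>r \<le> j\<close> by simp
                  qed
                qed (use hj s n_def in auto)
                then have "reach_in E (B' - {c}) (qs ! s) (qs ! 0)" by (rule reach_sym[OF sym])
                then have az: "reach_in E (B' - {c}) a z" using s q0 by simp
                have wc: "w \<noteq> c" using \<open>c \<notin> B\<close> w by auto
                have "0 \<noteq> t" using st by simp
                then have "qs ! 0 \<noteq> qs ! t" using deq[of 0 t] t hj by simp
                then have zin: "z \<in> B' - {c}" using inB'[of 0] q0 t by auto
                have win: "w \<in> B' - {c}" using w wc Bsub by auto
                have "E z w" using sg_sym[OF sg ewz] .
                then have "reach_in E (B' - {c}) z w" using reach_edge zin win by metis
                then have "reach_in E (B' - {c}) a w" using az reach_trans by metis
                then show ?thesis using w by blast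
              qed
            qed
          qed
        qed
      qed
    qed
    then show ?thesis unfolding cut_vertex_def connected_in_def by blast
  qed
  have "nonsep E B'" unfolding nonsep_def using con nocut Bsub by auto
  then show ?thesis using Bsub B'V by blast
qed



lemma nbr_in_block:
  assumes sg: "sgraph V E" and conn: "connected_in E V" and blk: "is_block V E B"
    and w: "w \<in> B" and nc: "\<not> cut_vertex E V w" and e: "E w z"
  shows "z \<in> B"
proof (rule ccontr)
  assume zB: "z \<notin> B"
  have BV: "B \<subseteq> V" and ns: "nonsep E B" and mx: "\<forall>B'. B \<subset> B' \<and> B' \<subseteq> V \<longrightarrow> \<not> nonsep E B'"
    using blk unfolding is_block_def by simp_all
  have zV: "z \<in> V" "w \<in> V" using sg_in[OF sg e] by auto
  show False
  proof (cases "B = {w}")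
    case True
    have "nonsep E {w, z}" using nonsep_edge[OF sg e] .
    moreover have "B \<subset> {w, z}" "{w, z} \<subseteq> V" using True zB zV by auto
    ultimately show False using mx by blast
  next
    case False
    then obtain b where b: "b \<in> B" "b \<noteq> w" using w by auto
    have zw: "z \<noteq> w" using e sg_irr[OF sg] by auto
    have "reach_in E V z b" using conn zV b BV unfolding connected_in_def by auto
    moreover have "\<forall>u\<in>V-{w}. \<forall>v\<in>V-{w}. reach_in E V u v \<longrightarrow> reach_in E (V - {w}) u v"
      using nc zV(2) unfolding cut_vertex_def by blast
    moreover have "z \<in> V - {w}" "b \<in> V - {w}" using zV zw b BV by auto
    ultimately have "reach_in E (V - {w}) z b" by blast
    then obtain qs where qs: "gpath E (V - {w}) qs" "hd qs = z" "last qs = b" using reach_path[of E "V - {w}" z b] by blast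
    obtain B' where "B \<subset> B'" "B' \<subseteq> V" "nonsep E B'"
      using ear[OF sg BV ns w b(1) b(2) zV(1) zB e qs(1) qs(2) qs(3)] by blast
    then show False using mx by blast
  qed
qed

lemma block_ge2:
  assumes sg: "sgraph V E" and conn: "connected_in E V" and c2: "card V \<ge> 2"
    and blk: "is_block V E B" and x: "x \<in> B"
  shows "\<exists>b\<in>B. b \<noteq> x"
proof (rule ccontr)
  assume na: "\<not> ?thesis"
  have "\<forall>b\<in>B. b = x" using na by blast
  then have B: "B = {x}" using x by blast
  have BV: "B \<subseteq> V" and mx: "\<forall>B'. B \<subset> B' \<and> B' \<subseteq> V \<longrightarrow> \<not> nonsep E B'"
    using blk unfolding is_block_def by (simp_all)
  have xV: "x \<in> V" using BV x by blast
  have "V \<noteq> {x}" using c2 by auto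
  then obtain t where t: "t \<in> V" "t \<noteq> x" using xV by auto
  have "reach_in E V x t" using conn xV t unfolding connected_in_def by auto
  then obtain x' where x': "x' \<in> V" "E x x'" using reach_first[of E V x t] t(2) by blast
  have "x' \<noteq> x" using x'(2) sg_irr[OF sg, of x] by auto
  then have "B \<subset> {x, x'}" "{x, x'} \<subseteq> V" using B xV x' by auto
  moreover have "nonsep E {x, x'}" using nonsep_edge[OF sg x'(2)] .
  ultimately show False using mx by blast
qed

lemma echain_app2:
  assumes "echain E xs" "echain E ys" "xs \<noteq> []" "ys \<noteq> []" "E (last xs) (hd ys)"
  shows "echain E (xs @ ys)"
  unfolding echain_def
proof (intro allI impI)
  fix i assume i: "Suc i < length (xs @ ys)"
  consider "Suc i < length xs" | "Suc i = length xs" | "Suc i > length xs" by linarith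
  then show "E ((xs @ ys) ! i) ((xs @ ys) ! Suc i)"
  proof cases
    case 1 then show ?thesis using assms(1) unfolding echain_def by (auto simp: nth_append)
  next
    case 2
    then have ii: "i = length xs - 1" by simp
    then have "(xs @ ys) ! i = last xs" using assms(3) 2 by (simp add: nth_append last_conv_nth)
    moreover have "(xs @ ys) ! Suc i = hd ys" using assms(4) 2 by (simp add: nth_append hd_conv_nth)
    ultimately show ?thesis using assms(5) by simp
  next
    case 3
    then have "(xs @ ys) ! i = ys ! (i - length xs)" "(xs @ ys) ! Suc i = ys ! Suc (i - length xs)"
      "Suc (i - length xs) < length ys"
      using i by (auto simp: nth_append Suc_diff_le)
    then show ?thesis using assms(2) unfolding echain_def by simp
  qed
qed

lemma rotate_path:
  assumes sg: "sgraph V E" and p: "gpath E S ps" and i: "Suc i < length ps"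
    and e: "E (ps ! i) (last ps)"
  shows "gpath E S (take (Suc i) ps @ rev (drop (Suc i) ps))
     \<and> hd (take (Suc i) ps @ rev (drop (Suc i) ps)) = hd ps
     \<and> last (take (Suc i) ps @ rev (drop (Suc i) ps)) = ps ! Suc i
     \<and> set (take (Suc i) ps @ rev (drop (Suc i) ps)) = set ps
     \<and> length (take (Suc i) ps @ rev (drop (Suc i) ps)) = length ps"
proof -
  have ne: "ps \<noteq> []" and d: "distinct ps" and ss: "set ps \<subseteq> S" and ch: "echain E ps"
    using p unfolding gpath_def by auto
  let ?A = "take (Suc i) ps" and ?B = "drop (Suc i) ps"
  have dj: "set ?A \<inter> set ?B = {}" using set_take_disj_set_drop_if_distinct[OF d, of "Suc i" "Suc i"] by simp
  have d2: "distinct (?A @ rev ?B)" using d dj by (simp add: distinct_append)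
  have st: "set (?A @ rev ?B) = set ps" by (metis append_take_drop_id set_append set_rev)
  have Ane: "?A \<noteq> []" "?B \<noteq> []" using i by auto
  have lA: "last ?A = ps ! i" using i by (simp add: take_Suc_conv_app_nth)
  have hB: "hd (rev ?B) = last ps" using Ane by (simp add: hd_rev)
  have lB: "last (rev ?B) = ps ! Suc i" using i by (simp add: last_rev hd_drop_conv_nth)
  have "echain E (?A @ rev ?B)"
    by (rule echain_app2) (use ch Ane lA hB e echain_take echain_drop echain_rev[OF _ echain_drop[OF ch]]
        sg_sym[OF sg] in auto)
  then show ?thesis using d2 st ss Ane lA lB unfolding gpath_def by auto
qed



theorem lemma2p9:
  fixes V :: "'a set" and E :: "'a \<Rightarrow> 'a \<Rightarrow> bool"
  assumes "sgraph V E"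
    and "connected_in E V"
    and "card V \<ge> 4"
    and "delta2_ge V E 4"
  shows "has_chorded_cycle V E \<or> (\<forall>B. leaf_block V E B \<longrightarrow> is_triangle E B)"
proof (cases "has_chorded_cycle V E")
  case True then show ?thesis by blast
next
  case False
  note nc = False
  have sg: "sgraph V E" and conn: "connected_in E V" and c4: "card V \<ge> 4" and d2: "delta2_ge V E 4"
    using assms by auto
  have sym: "\<And>a b. E a b \<Longrightarrow> E b a" using sg_sym[OF sg] by metis
  have "\<forall>B. leaf_block V E B \<longrightarrow> is_triangle E B"
  proof (intro allI impI)
    fix B assume lb: "leaf_block V E B"
    have blk: "is_block V E B" and c1: "card {y \<in> B. cut_vertex E V y} = 1"
      using lb unfolding leaf_block_def by auto
    obtain x where xs: "{y \<in> B. cut_vertex E V y} = {x}" using c1 by (rule card_1_singletonE)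
    have xB: "x \<in> B" using xs by auto
    have BV: "B \<subseteq> V" and ns: "nonsep E B" using blk unfolding is_block_def by auto
    have Bcon: "connected_in E B" using ns unfolding nonsep_def by auto
    have NB: "nbhd V E w \<subseteq> B" if "w \<in> B" "w \<noteq> x" for w
    proof
      fix z assume "z \<in> nbhd V E w"
      then have "E w z" using in_nbhd[OF sg] by auto
      moreover have "\<not> cut_vertex E V w" using xs that by auto
      ultimately show "z \<in> B" using nbr_in_block[OF sg conn blk that(1)] by auto
    qed
    have deg2: "card (nbhd V E u) \<ge> 2" if "u \<in> V" for u using min_deg2[OF sg conn c4 d2 nc that] .
    obtain b where b: "b \<in> B" "b \<noteq> x" using block_ge2[OF sg conn _ blk xB] c4 by auto
    have "reach_in E B x b" using Bcon xB b unfolding connected_in_def by auto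
    then obtain x' where x': "x' \<in> B" "E x x'" using reach_first b by metis
    have p0: "gpath E B [x, x']" using x' xB sg_irr[OF sg] unfolding gpath_def echain_def
      by (auto simp: nth_Cons split: nat.splits)
    obtain ps where ps: "gpath E B ps" "hd ps = x"
      and mx: "\<forall>ps'. gpath E B ps' \<and> hd ps' = x \<longrightarrow> length ps' \<le> length ps"
      using longest[OF sg BV p0, of "\<lambda>ps. hd ps = x"] by auto
    define n where "n = length ps"
    have n2: "n \<ge> 2" using mx p0 n_def by fastforce
    have ne: "ps \<noteq> []" and dist: "distinct ps" and sB: "set ps \<subseteq> B" and ch: "echain E ps"
      using ps unfolding gpath_def by auto
    have psV: "gpath E V ps" using ps BV unfolding gpath_def by auto
    have deq: "ps ! r = ps ! t \<longleftrightarrow> r = t" if "r < n" "t < n" for r t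
      using nth_eq_iff_index_eq[OF dist] that n_def by auto
    have inB: "ps ! r \<in> B" if "r < n" for r using sB that n_def nth_mem by blast
    have hd0: "ps ! 0 = x" using ps ne hd_conv_nth by metis
    have lst: "last ps = ps ! (n - 1)" using ne n_def last_conv_nth by metis
    have edge: "E (ps ! r) (ps ! Suc r)" if "Suc r < n" for r using ch that n_def unfolding echain_def by auto
    have endprop: "nbhd V E (last qs) \<subseteq> set qs \<and> card (nbhd V E (last qs)) = 2"
      if q: "gpath E B qs" "hd qs = x" "length qs = n" "last qs \<noteq> x" for qs
    proof -
      have lB: "last qs \<in> B" using q unfolding gpath_def by auto
      have sub: "nbhd V E (last qs) \<subseteq> set qs"
      proof (rule end_nbrs[OF sg q(1), of "\<lambda>ps. hd ps = x"])
        show "\<forall>ps'. gpath E B ps' \<and> hd ps' = x \<longrightarrow> length ps' \<le> length qs" using mx q n_def by auto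
        show "gpath E B (qs @ [z]) \<Longrightarrow> hd (qs @ [z]) = x" for z using q unfolding gpath_def by auto
        show "nbhd V E (last qs) \<subseteq> B" using NB lB q(4) by auto
      qed (use q in auto)
      have "gpath E V qs" using q BV unfolding gpath_def by auto
      then have "\<not> card (nbhd V E (last qs)) \<ge> 3" using cc_deg[OF sg _ sub] nc by auto
      moreover have "card (nbhd V E (last qs)) \<ge> 2" using deg2 lB BV by auto
      ultimately show ?thesis using sub by auto
    qed
    have y_ne: "last ps \<noteq> x" using lst hd0 deq[of "n - 1" 0] n2 by auto
    have Ny: "nbhd V E (last ps) \<subseteq> set ps" "card (nbhd V E (last ps)) = 2"
      using endprop[OF ps n_def[symmetric] y_ne] by auto
    have s2: "Suc (n - 2) = n - 1" "Suc (n - 2) < n" using n2 by auto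
    have "E (ps ! (n - 2)) (ps ! (n - 1))" using edge[OF s2(2)] s2(1) by simp
    then have "E (last ps) (ps ! (n - 2))" using lst sym by simp
    then have pm: "ps ! (n - 2) \<in> nbhd V E (last ps)" using in_nbhd[OF sg] by blast
    have "nbhd V E (last ps) - {ps ! (n - 2)} \<noteq> {}"
    proof
      assume "nbhd V E (last ps) - {ps ! (n - 2)} = {}"
      then have "nbhd V E (last ps) \<subseteq> {ps ! (n - 2)}" by auto
      then have "card (nbhd V E (last ps)) \<le> card {ps ! (n - 2)}" by (rule card_mono[rotated]) simp
      then have "card (nbhd V E (last ps)) \<le> 1" by simp
      then show False using Ny by auto
    qed
    then obtain a where a: "a \<in> nbhd V E (last ps)" "a \<noteq> ps ! (n - 2)" by auto
    have "a \<in> set ps" using Ny(1) a(1) by blast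
    then obtain i where i: "i < n" "ps ! i = a" unfolding n_def by (auto simp: in_set_conv_nth)
    have "E (last ps) a" using a(1) in_nbhd[OF sg] by blast
    then have "a \<noteq> last ps" using sg_irr[OF sg, of a] by auto
    then have "i \<noteq> n - 1" using lst i by auto
    moreover have "i \<noteq> n - 2" using i a by auto
    ultimately have i2: "Suc (Suc i) < n" using i by auto
    have Nyeq: "nbhd V E (last ps) = {ps ! (n - 2), ps ! i}"
    proof -
      have "{ps ! (n - 2), ps ! i} \<subseteq> nbhd V E (last ps)" using pm a i by auto
      moreover have "card {ps ! (n - 2), ps ! i} = card (nbhd V E (last ps))" using a i Ny(2) by simp
      ultimately show ?thesis using card_subset_eq[OF nbhd_fin[OF sg]] by blast
    qed
    have eiy: "E (ps ! i) (last ps)" using a i in_nbhd[OF sg] sym by auto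
    define ps' where "ps' = take (Suc i) ps @ rev (drop (Suc i) ps)"
    have rot: "gpath E B ps'" "hd ps' = x" "last ps' = ps ! Suc i" "set ps' = set ps" "length ps' = n"
      using rotate_path[OF sg ps(1) _ eiy] i2 ps(2) n_def unfolding ps'_def by auto
    have v_ne: "ps ! Suc i \<noteq> x" using hd0 deq[of "Suc i" 0] i2 by auto
    have Nv: "nbhd V E (ps ! Suc i) \<subseteq> set ps" "card (nbhd V E (ps ! Suc i)) = 2"
      using endprop[OF rot(1,2,5)] rot(3,4) v_ne by auto
    have Nveq: "nbhd V E (ps ! Suc i) = {ps ! i, ps ! Suc (Suc i)}"
    proof -
      have "ps ! i \<in> nbhd V E (ps ! Suc i)" using edge[of i] i2 sym in_nbhd[OF sg] by auto
      moreover have "ps ! Suc (Suc i) \<in> nbhd V E (ps ! Suc i)" using edge[of "Suc i"] i2 in_nbhd[OF sg] by auto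
      moreover have "ps ! i \<noteq> ps ! Suc (Suc i)" using deq[of i "Suc (Suc i)"] i2 by auto
      ultimately have "{ps ! i, ps ! Suc (Suc i)} \<subseteq> nbhd V E (ps ! Suc i)"
          "card {ps ! i, ps ! Suc (Suc i)} = card (nbhd V E (ps ! Suc i))"
        using Nv(2) by auto
      then show ?thesis using card_subset_eq[OF nbhd_fin[OF sg]] by blast
    qed
    show "is_triangle E B"
    proof (cases "Suc (Suc (Suc i)) < n")
      case True
      have vy: "ps ! Suc i \<noteq> ps ! (n - 2)" "ps ! Suc i \<noteq> ps ! i" "ps ! Suc i \<noteq> last ps"
        using deq[of "Suc i" "n - 2"] deq[of "Suc i" i] deq[of "Suc i" "n - 1"] True lst by auto
      then have "\<not> E (last ps) (ps ! Suc i)" using Nyeq in_nbhd[OF sg] by blast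
      moreover have "last ps \<in> V" "ps ! Suc i \<in> V" using inB BV i2 lst n2 by auto
      moreover have "\<forall>u\<in>V. \<forall>v\<in>V. u \<noteq> v \<and> \<not> E u v \<longrightarrow> card (nbhd V E u \<union> nbhd V E v) \<ge> 4"
        using d2 unfolding delta2_ge_def by blast
      ultimately have "card (nbhd V E (last ps) \<union> nbhd V E (ps ! Suc i)) \<ge> 4"
        using vy(3) by metis
      moreover have "nbhd V E (last ps) \<union> nbhd V E (ps ! Suc i) = {ps ! (n - 2), ps ! i, ps ! Suc (Suc i)}"
        using Nyeq Nveq by auto
      moreover have "card {ps ! (n - 2), ps ! i, ps ! Suc (Suc i)} \<le> 3" by (simp add: card_insert_if)
      ultimately show ?thesis by auto
    next
      case False
      then have n3: "n = Suc (Suc (Suc i))" using i2 by auto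
      define a0 where "a0 = ps ! i"
      define a1 where "a1 = ps ! Suc i"
      define a2 where "a2 = ps ! Suc (Suc i)"
      have l2: "last ps = a2" using lst n3 a2_def by auto
      have m2: "ps ! (n - 2) = a1" using n3 a1_def by auto
      have N2: "nbhd V E a2 = {a1, a0}" using Nyeq l2 m2 a0_def by auto
      have N1: "nbhd V E a1 = {a0, a2}" using Nveq a0_def a1_def a2_def by auto
      have dif: "a0 \<noteq> a1" "a1 \<noteq> a2" "a0 \<noteq> a2" unfolding a0_def a1_def a2_def
        using deq[of i "Suc i"] deq[of "Suc i" "Suc (Suc i)"] deq[of i "Suc (Suc i)"] n3 by auto
      have Bs: "a0 \<in> B" "a1 \<in> B" "a2 \<in> B" unfolding a0_def a1_def a2_def using inB n3 by auto
      have BT: "B = {a0, a1, a2}"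
      proof (rule ccontr)
        assume "B \<noteq> {a0, a1, a2}"
        then obtain t where t: "t \<in> B" "t \<notin> {a0, a1, a2}" using Bs by auto
        have "reach_in E B a2 t" using Bcon Bs t unfolding connected_in_def by auto
        moreover have "\<not> reach_in E (B - {a0}) a2 t"
        proof
          assume "reach_in E (B - {a0}) a2 t"
          then have "t \<in> {a1, a2}"
          proof (rule reach_closed)
            show "\<forall>a b. a \<in> {a1, a2} \<longrightarrow> b \<in> B - {a0} \<longrightarrow> E a b \<longrightarrow> b \<in> {a1, a2}"
              using N1 N2 in_nbhd[OF sg] by blast
          qed auto
          then show False using t by auto
        qed
        ultimately have "cut_vertex E B a0" unfolding cut_vertex_def using Bs t dif by blast
        then show False using ns unfolding nonsep_def by auto
      qed
      have "a0 \<in> nbhd V E a1" "a2 \<in> nbhd V E a1" "a0 \<in> nbhd V E a2" using N1 N2 by auto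
      then have "E a1 a0" "E a1 a2" "E a2 a0" using in_nbhd[OF sg] by blast+
      then have e01: "E a0 a1" "E a1 a2" "E a2 a0" using sym by blast+
      show ?thesis unfolding is_triangle_def BT using dif e01 sym by auto
    qed
  qed
  then show ?thesis by blast
qed


end
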